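(* In the setting below, with $\mu=\alpha_1+\alpha_2+2\alpha_3+2\alpha_4+\alpha_5+\alpha_6$ and $\tau\mu=\alpha_1+\alpha_2+\alpha_3+2\alpha_4+2\alpha_5+\alpha_6$, the vector $$P=(-2\alpha_1-\alpha_3+\alpha_5+2\alpha_6)(-1)\otimes e^{\mu}+(2\alpha_1+\alpha_3-\alpha_5-2\alpha_6)(-1)\otimes e^{\tau\mu}+3\otimes e^{\mu+\alpha_1-\alpha_6}+3\otimes e^{\tau\mu-\alpha_1+\alpha_6}\in V^{\Lambda_0}$$ is a highest weight vector of type $Vir(\tfrac45,\tfrac75)\otimes W^{\Omega_4}$, i.e. it satisfies (HW1)–(HW5) with $h=7/5$ and $\omega_j=\omega_4$.
   Context: Setting. $Q$ is the $E_6$ root lattice with simple roots $\alpha_1,\dots,\alpha_6$ (Dynkin chain $\alpha_1-\alpha_3-\alpha_4-\alpha_5-\alpha_6$, $\alpha_2$ attached to $\alpha_4$), form from the Cartan matrix, fundamental weights $\lambda_i$, $P_{\rm wt}=\bigoplus\mathbb Z\lambda_i$, $\mathfrak h=\mathbb C\otimes P_{\rm wt}$. $\varepsilon$ is bimultiplicative on $P_{\rm wt}$ with $[\varepsilon(\lambda_i,\lambda_j)]$ rows $(1,1,1,1,1,1)$, $(-1,1,1,1,1,-1)$, $(-1,1,1,1,1,1)$, $(1,-1,1,1,1,1)$, $(1,1,1,1,1,-1)$, $(1,1,1,1,1,1)$. $V_{P_{\rm wt}}=S(\hat{\mathfrak h}^-)\otimes\mathbb C[P_{\rm wt}]$ with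 Heisenberg operators $h(n)$ ($[h(m),h'(n)]=m\langle h,h'\rangle\delta_{m+n,0}$, $h(n)1=0$ for $n>0$, $h(0)(u\otimes e^\beta)=\langle h,\beta\rangle u\otimes e^\beta$). For $\alpha\in Q$: $Y(1\otimes e^\alpha,z)=\exp(\sum_{k\ge1}\frac{\alpha(-k)}kz^k)\exp(-\sum_{k\ge1}\frac{\alpha(k)}kz^{-k})e_\alpha z^{\alpha(0)}=\sum_n\{1\otimes e^\alpha\}_nz^{-n-1}$, $e_\alpha(u\otimes e^\beta)=\varepsilon(\alpha,\beta)u\otimes e^{\alpha+\beta}$, $z^{\alpha(0)}(u\otimes e^\beta)=z^{\langle\alpha,\beta\rangle}u\otimes e^\beta$; $Y(h_1(-1)\cdots h_k(-1)\otimes e^\alpha,z)=\,:h_1(z)\cdots h_k(z)Y(1\otimes e^\alpha,z):$, $h(z)=\sum_nh(n)z^{-n-1}$. $V^{\Lambda_0}=S(\hat{\mathfrak h}^-)\otimes\mathbb C[Q]$. $\tau$: $\alpha_1\leftrightarrow\alpha_6$, $\alpha_3\leftrightarrow\alpha_5$; $\mathrm{Proj}(\nu)=(\nu+\tau\nu)/2$. $\theta=\alpha_1+2\alpha_2+2\alpha_3+3\alpha_4+2\alpha_5+\alpha_6$. Raising operators of $\tilde{\mathfrak a}$ ($F_4^{(1)}$): $\{\beta_1\}_0=\{1\otimes e^{\alpha_2}\}_0$, $\{\beta_2\}_0=\{1\otimes e^{\alpha_4}\}_0$, $\{\beta_3\}_0=\{1\otimes e^{\alpha_3}\}_0+\{1\otimes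 e^{\alpha_5}\}_0$, $\{\beta_4\}_0=\{1\otimes e^{\alpha_1}\}_0+\{1\otimes e^{\alpha_6}\}_0$, $\{1\otimes e^{-\theta}\}_1$. Coset conformal vector $\omega=\frac1{10}[(-\lambda_1+\lambda_6)(-1)^2+(\lambda_3-\lambda_5)(-1)^2+(\lambda_1-\lambda_3+\lambda_5-\lambda_6)(-1)^2]\otimes e^0+\frac15(-1\otimes e^{\pm\gamma_1}-1\otimes e^{\pm\gamma_2}+1\otimes e^{\pm\gamma_3})$, $\gamma_1=\alpha_1-\alpha_6$, $\gamma_2=\alpha_3-\alpha_5$, $\gamma_3=\gamma_1+\gamma_2$, $1\otimes e^{\pm\gamma}:=1\otimes e^\gamma+1\otimes e^{-\gamma}$; $L(n)=\{\omega\}_{n+1}$ (Virasoro, $c=4/5$, commuting with $\tilde{\mathfrak a}$). $\omega_4=\frac{\lambda_1+\lambda_6}2$, $\Omega_4$ the level one $F_4^{(1)}$ weight with finite part $\omega_4$, $W^{\Omega_4}$ its irreducible module. A nonzero $v$ is a highest weight vector of type $Vir(\frac45,h)\otimes W^{\Omega_j}$ if (HW1) $\{1\otimes e^{-\theta}\}_1v=0$; (HW2) $\{\beta_i\}_0v=0$, $i=1,\dots,4$; (HW3) $L(1)v=L(2)v=0$; (HW4) $L(0)v=hv$; (HW5) $v\in\bigoplus_kS(\hat{\mathfrak h}^-)\otimes e^{\nu_k}$ with $\mathrm{Proj}(\nu_k)=\omega_j$. (The lattice is written $P_{\rm wt}$ here to avoid a clash with the vector named $P$.) *)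

theory Defs
  imports Complex_Main "HOL-Library.Poly_Mapping" "HOL-Library.Function_Algebras"
begin

section \<open>Index set of the E6 Dynkin diagram\<close>

datatype idx = I1 | I2 | I3 | I4 | I5 | I6

lemma UNIV_idx: "(UNIV :: idx set) = {I1, I2, I3, I4, I5, I6}"
  using idx.exhaust by auto

instance idx :: finite
  by standard (simp add: UNIV_idx)

fun ix :: "idx \<Rightarrow> nat" where
  "ix I1 = 0" | "ix I2 = 1" | "ix I3 = 2" | "ix I4 = 3" | "ix I5 = 4" | "ix I6 = 5"

definition vec6 :: "'a \<Rightarrow> 'a \<Rightarrow> 'a \<Rightarrow> 'a \<Rightarrow> 'a \<Rightarrow> 'a \<Rightarrow> idx \<Rightarrow> 'a" where
  "vec6 a1 a2 a3 a4 a5 a6 = (\<lambda>i. case i of I1 \<Rightarrow> a1 | I2 \<Rightarrow> a2 | I3 \<Rightarrow> a3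
                                         | I4 \<Rightarrow> a4 | I5 \<Rightarrow> a5 | I6 \<Rightarrow> a6)"

text \<open>Coordinates.
  \<^item> an element of the weight lattice P_wt is stored by its coordinates w.r.t. the
    fundamental weights lambda_1..lambda_6 (type wt);
  \<^item> an element of the root lattice Q is stored by its coordinates w.r.t. the
    simple roots alpha_1..alpha_6 (type rt);
  \<^item> an element of h = C (x) P_wt is stored by its (complex) coordinates w.r.t. the
    fundamental weights (type hvec).\<close>

type_synonym wt = "idx \<Rightarrow> int"
type_synonym rt = "idx \<Rightarrow> int"
type_synonym hvec = "idx \<Rightarrow> complex"

text \<open>Cartan matrix of E6: chain 1-3-4-5-6, node 2 attached to node 4.\<close>
definition cartan :: "idx \<Rightarrow> idx \<Rightarrow> int" where
  "cartan i j = [[2, 0, -1, 0, 0, 0],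
                 [0, 2, 0, -1, 0, 0],
                 [-1, 0, 2, -1, 0, 0],
                 [0, -1, -1, 2, -1, 0],
                 [0, 0, 0, -1, 2, -1],
                 [0, 0, 0, 0, -1, 2]] ! ix i ! ix j"

text \<open>Gram matrix of the fundamental weights, gram i j = (lambda_i, lambda_j),
  i.e. the inverse of the Cartan matrix (see lemma cartan_gram_inverse).\<close>
definition gram :: "idx \<Rightarrow> idx \<Rightarrow> rat" where
  "gram i j = [[4/3, 1, 5/3, 2, 4/3, 2/3],
               [1, 2, 2, 3, 2, 1],
               [5/3, 2, 10/3, 4, 8/3, 4/3],
               [2, 3, 4, 6, 4, 2],
               [4/3, 2, 8/3, 4, 10/3, 5/3],
               [2/3, 1, 4/3, 2, 5/3, 4/3]] ! ix i ! ix j"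

lemma cartan_gram_inverse:
  "(\<Sum>k\<in>UNIV. of_int (cartan i k) * gram k j) = (if i = j then 1 else 0)"
  by (cases i; cases j) (simp_all add: UNIV_idx cartan_def gram_def)

text \<open>Simple root alpha_i in fundamental-weight coordinates; Q -> P_wt.\<close>
definition root_to_wt :: "rt \<Rightarrow> wt" where
  "root_to_wt a = (\<lambda>j. \<Sum>i\<in>UNIV. a i * cartan i j)"

definition hv_of_wt :: "wt \<Rightarrow> hvec" where
  "hv_of_wt b = (\<lambda>i. of_int (b i))"

definition lam :: "idx \<Rightarrow> hvec" where
  "lam j = (\<lambda>i. if i = j then 1 else 0)"

definition hform :: "hvec \<Rightarrow> hvec \<Rightarrow> complex" where
  "hform x y = (\<Sum>i\<in>UNIV. \<Sum>j\<in>UNIV. x i * of_rat (gram i j) * y j)"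

text \<open>(alpha, beta) for alpha in Q (root coordinates) and beta in P_wt (weight
  coordinates); an integer since (alpha_i, lambda_j) = delta_ij.\<close>
definition pair_rw :: "rt \<Rightarrow> wt \<Rightarrow> int" where
  "pair_rw a b = (\<Sum>i\<in>UNIV. a i * b i)"

definition eps_tab :: "idx \<Rightarrow> idx \<Rightarrow> int" where
  "eps_tab i j = [[1,1,1,1,1,1],
                  [-1,1,1,1,1,-1],
                  [-1,1,1,1,1,1],
                  [1,-1,1,1,1,1],
                  [1,1,1,1,1,-1],
                  [1,1,1,1,1,1]] ! ix i ! ix j"

text \<open>The bimultiplicative map eps on P_wt with the above values on the
  fundamental weights: eps(x,y) = prod_{i,j} eps(lambda_i,lambda_j)^(x_i y_j).\<close>
definition epsw :: "wt \<Rightarrow> wt \<Rightarrow> complex" where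
  "epsw x y = (if even (\<Sum>i\<in>UNIV. \<Sum>j\<in>UNIV. if eps_tab i j = -1 then x i * y j else 0)
               then 1 else -1)"

section \<open>The Fock space S(h^-) and V_{P_wt}\<close>

text \<open>A monomial in the generators lambda_i(-k), k >= 1: the key (i, k - 1) carries
  the exponent of lambda_i(-k).  A vector of S(h^-) is given by its coefficients
  on these monomials; a vector of V_{P_wt} = S(h^-) (x) C[P_wt] by its components
  on the summands S(h^-) (x) e^beta.\<close>

type_synonym mono = "(idx \<times> nat) \<Rightarrow>\<^sub>0 nat"
type_synonym fock = "mono \<Rightarrow> complex"
type_synonym vspace = "wt \<Rightarrow> fock"

definition var :: "idx \<Rightarrow> nat \<Rightarrow> mono" where
  "var i k = Poly_Mapping.single (i, k - 1) 1"

text \<open>Weight (degree) of a monomial: lambda_i(-k) has weight k.\<close>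
definition mwt :: "mono \<Rightarrow> nat" where
  "mwt M = (\<Sum>x\<in>Poly_Mapping.keys M. (snd x + 1) * Poly_Mapping.lookup M x)"

definition vac :: fock where
  "vac = (\<lambda>M. if M = 0 then 1 else 0)"

text \<open>Multiplication by lambda_i(-k) and d/d lambda_i(-k), for k >= 1.\<close>
definition mul_var :: "idx \<Rightarrow> nat \<Rightarrow> fock \<Rightarrow> fock" where
  "mul_var i k w = (\<lambda>M. if Poly_Mapping.lookup M (i, k - 1) > 0 then w (M - var i k) else 0)"

definition der_var :: "idx \<Rightarrow> nat \<Rightarrow> fock \<Rightarrow> fock" where
  "der_var i k w = (\<lambda>M. of_nat (Poly_Mapping.lookup M (i, k - 1) + 1) * w (M + var i k))"

text \<open>h(-k) (creation) and h(k) (annihilation), k >= 1, on S(h^-):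
  h(-k) = multiplication by sum_i h_i lambda_i(-k);
  h(k) = sum_j k (h, lambda_j) d/d lambda_j(-k)
  (so that [h(k), h'(-k)] = k (h, h') and h(k) 1 = 0).\<close>
definition cr :: "hvec \<Rightarrow> nat \<Rightarrow> fock \<Rightarrow> fock" where
  "cr h k w = (\<lambda>M. \<Sum>i\<in>UNIV. h i * mul_var i k w M)"

definition an :: "hvec \<Rightarrow> nat \<Rightarrow> fock \<Rightarrow> fock" where
  "an h k w = (\<lambda>M. \<Sum>j\<in>UNIV. of_nat k * hform h (lam j) * der_var j k w M)"

definition hmode :: "hvec \<Rightarrow> int \<Rightarrow> vspace \<Rightarrow> vspace" where
  "hmode h n v = (\<lambda>\<beta>. if n < 0 then cr h (nat (- n)) (v \<beta>)
                     else if n = 0 then (\<lambda>M. hform h (hv_of_wt \<beta>) * v \<beta> M)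
                     else an h (nat n) (v \<beta>))"

text \<open>Coefficients of the exponentials:
  exp(-sum_{k>=1} h(k)/k z^-k) = sum_m sE h m z^-m,
  exp( sum_{k>=1} h(-k)/k z^k) = sum_j pE h j z^j,
  determined by m sE_m = - sum_{k=1..m} h(k) sE_{m-k},  j pE_j = sum_{k=1..j} h(-k) pE_{j-k}.\<close>
fun sE :: "hvec \<Rightarrow> nat \<Rightarrow> fock \<Rightarrow> fock" where
  "sE h m w = (if m = 0 then w
     else (\<lambda>M. - (1 / of_nat m) * (\<Sum>k\<in>{1..m}. an h k (sE h (m - k) w) M)))"

fun pE :: "hvec \<Rightarrow> nat \<Rightarrow> fock \<Rightarrow> fock" where
  "pE h m w = (if m = 0 then w
     else (\<lambda>M. (1 / of_nat m) * (\<Sum>k\<in>{1..m}. cr h k (pE h (m - k) w) M)))"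

text \<open>The mode {1 (x) e^alpha}_n, alpha in Q (root coordinates):
  on u (x) e^beta it equals
  eps(alpha,beta) sum_{j,m >= 0, j - m = -n-1-(alpha,beta)} pE_j (sE_m u) (x) e^(alpha+beta).
  Evaluated at the component gamma = alpha + beta and at a monomial M, only
  j <= weight(M) can contribute (pE_j raises the weight by j), so the sum is finite.\<close>
definition vop_e :: "rt \<Rightarrow> int \<Rightarrow> vspace \<Rightarrow> vspace" where
  "vop_e a n v = (\<lambda>\<gamma> M.
     (let \<beta> = \<gamma> - root_to_wt a; h = hv_of_wt (root_to_wt a) in
      epsw (root_to_wt a) \<beta> *
      (\<Sum>j\<in>{0..mwt M}. (let m = int j + n + 1 + pair_rw a \<beta> in
          if m \<ge> 0 then pE h j (sE h (nat m) (v \<beta>)) M else 0))))"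

text \<open>The mode {h1(-1) h2(-1) (x) e^0}_n of Y(h1(-1)h2(-1) (x) e^0, z) = :h1(z) h2(z):,
  i.e. sum_{a + b = n - 1} :h1(a) h2(b):, where in the normal ordering the
  operators h(k), k >= 0, stand to the right.  At a monomial M only
  -weight(M) <= a <= n - 1 + weight(M) contribute.\<close>
definition vop_hh :: "hvec \<Rightarrow> hvec \<Rightarrow> int \<Rightarrow> vspace \<Rightarrow> vspace" where
  "vop_hh h1 h2 n v = (\<lambda>\<beta> M.
     \<Sum>a\<in>{- int (mwt M) .. n - 1 + int (mwt M)}.
       (if a \<ge> 0 \<and> n - 1 - a < 0 then hmode h2 (n - 1 - a) (hmode h1 a v)
        else hmode h1 a (hmode h2 (n - 1 - a) v)) \<beta> M)"

definition vsc :: "complex \<Rightarrow> vspace \<Rightarrow> vspace" where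
  "vsc c v = (\<lambda>\<beta> M. c * v \<beta> M)"

section \<open>The coset Virasoro operators L(n) = {omega}_{n+1}\<close>

definition gam1 :: rt where "gam1 = vec6 1 0 0 0 0 (-1)"
definition gam2 :: rt where "gam2 = vec6 0 0 1 0 (-1) 0"
definition gam3 :: rt where "gam3 = gam1 + gam2"

definition om_h1 :: hvec where "om_h1 = vec6 (-1) 0 0 0 0 1"
definition om_h2 :: hvec where "om_h2 = vec6 0 0 1 0 (-1) 0"
definition om_h3 :: hvec where "om_h3 = vec6 1 0 (-1) 0 1 (-1)"

definition Lvir :: "int \<Rightarrow> vspace \<Rightarrow> vspace" where
  "Lvir n v =
     vsc (1/10) (vop_hh om_h1 om_h1 (n + 1) v + vop_hh om_h2 om_h2 (n + 1) v
                 + vop_hh om_h3 om_h3 (n + 1) v)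
   + vsc (1/5) (- (vop_e gam1 (n + 1) v + vop_e (- gam1) (n + 1) v)
                - (vop_e gam2 (n + 1) v + vop_e (- gam2) (n + 1) v)
                + (vop_e gam3 (n + 1) v + vop_e (- gam3) (n + 1) v))"

definition alpha :: "idx \<Rightarrow> rt" where
  "alpha i = (\<lambda>j. if j = i then 1 else 0)"

definition theta :: rt where "theta = vec6 1 2 2 3 2 1"

text \<open>Diagram automorphism tau (alpha1 <-> alpha6, alpha3 <-> alpha5; it permutes the
  fundamental weights in the same way) and Proj(nu) = (nu + tau nu)/2.\<close>
fun tau :: "idx \<Rightarrow> idx" where
  "tau I1 = I6" | "tau I6 = I1" | "tau I3 = I5" | "tau I5 = I3" | "tau I2 = I2" | "tau I4 = I4"

definition proj_wt :: "wt \<Rightarrow> idx \<Rightarrow> rat" where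
  "proj_wt \<nu> = (\<lambda>i. (of_int (\<nu> i) + of_int (\<nu> (tau i))) / 2)"

definition omega4 :: "idx \<Rightarrow> rat" where "omega4 = vec6 (1/2) 0 0 0 0 (1/2)"

definition is_hwv :: "complex \<Rightarrow> (idx \<Rightarrow> rat) \<Rightarrow> vspace \<Rightarrow> bool" where
  "is_hwv h wj v \<longleftrightarrow>
     v \<noteq> 0
   \<comment> \<open>(HW1)\<close>
   \<and> vop_e (- theta) 1 v = 0
   \<comment> \<open>(HW2)\<close>
   \<and> vop_e (alpha I2) 0 v = 0
   \<and> vop_e (alpha I4) 0 v = 0
   \<and> vop_e (alpha I3) 0 v + vop_e (alpha I5) 0 v = 0
   \<and> vop_e (alpha I1) 0 v + vop_e (alpha I6) 0 v = 0
   \<comment> \<open>(HW3)\<close>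
   \<and> Lvir 1 v = 0 \<and> Lvir 2 v = 0
   \<comment> \<open>(HW4)\<close>
   \<and> Lvir 0 v = vsc h v
   \<comment> \<open>(HW5): v is a finite sum of elements of S(h^-) (x) e^nu_k with Proj(nu_k) = omega_j\<close>
   \<and> finite {\<beta>. v \<beta> \<noteq> 0} \<and> (\<forall>\<beta>. finite {M. v \<beta> M \<noteq> 0})
   \<and> (\<forall>\<beta>. v \<beta> \<noteq> 0 \<longrightarrow> proj_wt \<beta> = wj)"

definition tens :: "fock \<Rightarrow> wt \<Rightarrow> vspace" where
  "tens u \<beta> = (\<lambda>\<gamma>. if \<gamma> = \<beta> then u else (\<lambda>_. 0))"

definition mu :: rt where "mu = vec6 1 1 2 2 1 1"
definition tau_mu :: rt where "tau_mu = vec6 1 1 1 2 2 1"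

definition P_vec :: vspace where
  "P_vec =
     tens (cr (hv_of_wt (root_to_wt (vec6 (-2) 0 (-1) 0 1 2))) 1 vac) (root_to_wt mu)
   + tens (cr (hv_of_wt (root_to_wt (vec6 2 0 1 0 (-1) (-2)))) 1 vac) (root_to_wt tau_mu)
   + tens (\<lambda>M. 3 * vac M) (root_to_wt (mu + alpha I1 - alpha I6))
   + tens (\<lambda>M. 3 * vac M) (root_to_wt (tau_mu - alpha I1 + alpha I6))"

end

theory Submission
  imports Defs
begin


definition sm :: "complex \<Rightarrow> fock \<Rightarrow> fock" where "sm c w = (\<lambda>M. c * w M)"
definition lin :: "complex \<Rightarrow> hvec \<Rightarrow> fock" where
  "lin c g = (\<lambda>M. c * vac M + cr g 1 vac M)"

lemma var_lookup: "Poly_Mapping.lookup (var i k) x = (if x = (i, k - 1) then 1 else 0)"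
  by (simp add: var_def lookup_single when_def)

lemma vac_eq: "vac M = (if M = 0 then 1 else 0)" by (simp add: vac_def)

lemma mulvar_vac: "mul_var i k vac M = (if M = var i k then 1 else 0)"
proof -
  have "(0 < Poly_Mapping.lookup M (i, k - 1) \<and> M - var i k = 0) \<longleftrightarrow> M = var i k"
  proof
    assume a: "0 < Poly_Mapping.lookup M (i, k - 1) \<and> M - var i k = 0"
    show "M = var i k"
    proof (rule poly_mapping_eqI)
      fix x
      have "Poly_Mapping.lookup M x - Poly_Mapping.lookup (var i k) x = 0"
        using a by (metis lookup_minus lookup_zero)
      then show "Poly_Mapping.lookup M x = Poly_Mapping.lookup (var i k) x"
        using a by (auto simp: lookup_minus var_lookup)
    qed
  next
    assume "M = var i k" then show "0 < Poly_Mapping.lookup M (i, k - 1) \<and> M - var i k = 0"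
      by (simp add: var_lookup)
  qed
  then show ?thesis by (auto simp: mul_var_def vac_def)
qed

lemma mwt_pos: assumes "0 < Poly_Mapping.lookup M (i, k)" shows "0 < mwt M"
proof -
  have fin: "finite (Poly_Mapping.keys M)" by simp
  have mem: "(i,k) \<in> Poly_Mapping.keys M" using assms by (simp add: in_keys_iff)
  have "(snd (i,k) + 1) * Poly_Mapping.lookup M (i,k) \<le> mwt M"
    unfolding mwt_def by (rule member_le_sum[OF mem _ fin]) simp
  then show ?thesis using assms by simp
qed

lemma mulvar_mwt0: "mwt M = 0 \<Longrightarrow> mul_var i k w M = 0"
  using mwt_pos[of M i "k - 1"] by (auto simp: mul_var_def)

lemma cr_mwt0: "mwt M = 0 \<Longrightarrow> cr h k w M = 0"
  by (simp add: cr_def mulvar_mwt0)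

lemma mul_var_add: "mul_var i k (w1 + w2) = mul_var i k w1 + mul_var i k w2"
  by (auto simp: mul_var_def fun_eq_iff)
lemma mul_var_sm: "mul_var i k (sm c w) = sm c (mul_var i k w)"
  by (auto simp: mul_var_def sm_def fun_eq_iff)
lemma mul_var_0: "mul_var i k 0 = 0"
  by (auto simp: mul_var_def fun_eq_iff)
lemma der_var_add: "der_var i k (w1 + w2) = der_var i k w1 + der_var i k w2"
  by (auto simp: der_var_def fun_eq_iff algebra_simps)
lemma der_var_sm: "der_var i k (sm c w) = sm c (der_var i k w)"
  by (auto simp: der_var_def sm_def fun_eq_iff)
lemma der_var_0: "der_var i k 0 = 0"
  by (auto simp: der_var_def fun_eq_iff)

lemma var_ne0: "M + var i k \<noteq> 0"
proof
  assume "M + var i k = 0"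
  then have "Poly_Mapping.lookup (M + var i k) (i, k - 1) = 0" by simp
  then show False by (simp add: lookup_add var_lookup)
qed

lemma der_var_vac: "der_var j k vac = 0"
  by (auto simp: der_var_def vac_def fun_eq_iff var_ne0)

lemma sum_var_eq: "M + var j k = var i l \<longleftrightarrow> M = 0 \<and> (j, k - 1) = (i, l - 1)"
proof
  assume a: "M + var j k = var i l"
  have "Poly_Mapping.lookup (M + var j k) (j, k - 1) = Poly_Mapping.lookup (var i l) (j, k - 1)"
    using a by simp
  then have e: "(j, k - 1) = (i, l - 1)"
    by (simp add: lookup_add var_lookup split: if_splits)
  have "M = 0"
  proof (rule poly_mapping_eqI)
    fix x
    have "Poly_Mapping.lookup (M + var j k) x = Poly_Mapping.lookup (var i l) x" using a by simp
    then show "Poly_Mapping.lookup M x = Poly_Mapping.lookup 0 x"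
      using e by (simp add: lookup_add var_lookup split: if_splits)
  qed
  then show "M = 0 \<and> (j, k - 1) = (i, l - 1)" using e by simp
next
  assume "M = 0 \<and> (j, k - 1) = (i, l - 1)"
  then show "M + var j k = var i l" by (simp add: var_def)
qed

lemma der_var_mulvar_vac: "der_var j k (mul_var i l vac) = (if (j, k - 1) = (i, l - 1) then vac else 0)"
  proof -
  have "\<And>M. der_var j k (mul_var i l vac) M = (if (j, k - 1) = (i, l - 1) then vac else 0) M"
    unfolding der_var_def mulvar_vac sum_var_eq by (simp add: vac_eq)
  then show ?thesis by auto
qed

lemma cr_add: "cr h k (w1 + w2) = cr h k w1 + cr h k w2"
  by (auto simp: cr_def fun_eq_iff mul_var_add algebra_simps sum.distrib)
lemma cr_sm: "cr h k (sm c w) = sm c (cr h k w)"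
  by (auto simp: cr_def fun_eq_iff mul_var_sm[unfolded sm_def] sm_def algebra_simps sum_distrib_left)
lemma cr_0: "cr h k 0 = 0"
  by (auto simp: cr_def fun_eq_iff mul_var_0)
lemma an_add: "an h k (w1 + w2) = an h k w1 + an h k w2"
  by (auto simp: an_def fun_eq_iff der_var_add algebra_simps sum.distrib)
lemma an_sm: "an h k (sm c w) = sm c (an h k w)"
  by (auto simp: an_def fun_eq_iff der_var_sm[unfolded sm_def] sm_def algebra_simps sum_distrib_left)
lemma an_0: "an h k 0 = 0"
  by (auto simp: an_def fun_eq_iff der_var_0)
lemma an_vac: "an h k vac = 0"
  by (auto simp: an_def fun_eq_iff der_var_vac)

lemma sm_0: "sm 0 w = 0" by (simp add: sm_def fun_eq_iff)
lemma sm_zero: "sm c 0 = 0" by (simp add: sm_def fun_eq_iff)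

lemma lin_split: "lin c g = sm c vac + cr g 1 vac"
  by (simp add: lin_def sm_def fun_eq_iff)

lemma hform_lam: "hform h g = (\<Sum>j\<in>UNIV. hform h (lam j) * g j)"
  by (simp add: hform_def lam_def sum_distrib_right sum_distrib_left algebra_simps
      if_distrib cong: if_cong) (rule sum.swap)

lemma der_cr_vac: "der_var j k (cr g 1 vac) M = (if k - 1 = 0 then g j * vac M else 0)"
proof -
  have "der_var j k (cr g 1 vac) M = (\<Sum>i\<in>UNIV. g i * der_var j k (mul_var i 1 vac) M)"
    by (simp add: der_var_def cr_def sum_distrib_left algebra_simps)
  also have "\<dots> = (\<Sum>i\<in>UNIV. if i = j then (if k - 1 = 0 then g j * vac M else 0) else 0)"
    by (rule sum.cong) (auto simp: der_var_mulvar_vac)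
  finally show ?thesis by simp
qed

lemma an_cr_vac: "an h k (cr g 1 vac) = (if k = 1 then sm (hform h g) vac else 0)"
proof (rule ext)
  fix M
  have "an h k (cr g 1 vac) M = (\<Sum>j\<in>UNIV. of_nat k * hform h (lam j) * (if k - 1 = 0 then g j * vac M else 0))"
    unfolding an_def der_cr_vac by simp
  also have "\<dots> = (if k = 1 then sm (hform h g) vac else 0) M"
  proof (cases "k = 1")
    case True
    then show ?thesis by (simp add: sm_def hform_lam[of h g] sum_distrib_left mult_ac)
  next
    case False
    then have "k = 0 \<or> k - 1 \<noteq> 0" by auto
    then show ?thesis using False by auto
  qed
  finally show "an h k (cr g 1 vac) M = (if k = 1 then sm (hform h g) vac else 0) M" .
qed

lemma an_lin: "an h k (lin c g) = (if k = 1 then sm (hform h g) vac else 0)"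
  unfolding lin_split an_add an_sm an_vac an_cr_vac by (simp add: sm_zero)

declare sE.simps[simp del] pE.simps[simp del]

lemma sE_0: "sE h m 0 = 0"
proof (induction m rule: less_induct)
  case (less m)
  have "\<And>k. k \<in> {1..m} \<Longrightarrow> an h k (sE h (m - k) 0) = 0"
  proof -
    fix k assume "k \<in> {1..m}"
    then have "m - k < m" by auto
    then have "sE h (m - k) 0 = 0" by (rule less.IH)
    then show "an h k (sE h (m - k) 0) = 0" by (simp add: an_0)
  qed
  then show ?case by (subst sE.simps) (simp add: fun_eq_iff)
qed
lemma pE_0: "pE h m 0 = 0"
proof (induction m rule: less_induct)
  case (less m)
  have "\<And>k. k \<in> {1..m} \<Longrightarrow> cr h k (pE h (m - k) 0) = 0"
  proof -
    fix k assume "k \<in> {1..m}"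
    then have "m - k < m" by auto
    then have "pE h (m - k) 0 = 0" by (rule less.IH)
    then show "cr h k (pE h (m - k) 0) = 0" by (simp add: cr_0)
  qed
  then show ?case by (subst pE.simps) (simp add: fun_eq_iff)
qed

lemma pE_zero: "pE h 0 w = w" by (simp add: pE.simps)
lemma pE_one: "pE h 1 w = cr h 1 w" by (subst pE.simps) (simp add: fun_eq_iff pE.simps)
lemma sE_zero: "sE h 0 w = w" by (simp add: sE.simps)

lemma sE_lin: "sE h m (lin c g) = (if m = 0 then lin c g else if m = 1 then sm (- hform h g) vac else 0)"
proof (induction m rule: less_induct)
  case (less m)
  show ?case
  proof (cases "m \<le> 1")
    case True
    then have "m = 0 \<or> m = 1" by auto
    then show ?thesis
      by (auto simp: an_lin sm_def fun_eq_iff sE_zero) (subst sE.simps, simp add: sE_zero an_lin sm_def)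
  next
    case False
    have "\<And>k. k \<in> {1..m} \<Longrightarrow> an h k (sE h (m - k) (lin c g)) = 0"
    proof -
      fix k assume k: "k \<in> {1..m}"
      show "an h k (sE h (m - k) (lin c g)) = 0"
        using False k less[of "m - k"] by (auto simp: an_lin an_sm an_vac an_0 sm_zero)
    qed
    then have "\<And>M. (\<Sum>k\<in>{1..m}. an h k (sE h (m - k) (lin c g)) M) = 0"
      by (simp add: sum.neutral)
    then show ?thesis using False by (subst sE.simps) (simp add: fun_eq_iff)
  qed
qed



lemma hform_0: "hform h 0 = 0" by (simp add: hform_def)

lemma lin_apply: "lin c g M = c * vac M + (\<Sum>i\<in>UNIV. g i * mul_var i 1 vac M)"
  by (simp add: lin_def cr_def)

lemma cr_sm_vac_apply: "cr h 1 (sm d vac) M = (\<Sum>i\<in>UNIV. d * h i * mul_var i 1 vac M)"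
  by (simp add: cr_def mul_var_sm[unfolded sm_def] sm_def algebra_simps)

lemma sE_0': "sE h m (\<lambda>_. 0) = (\<lambda>_. 0)" using sE_0[of h m] by (simp add: zero_fun_def)
lemma pE_0': "pE h m (\<lambda>_. 0) = (\<lambda>_. 0)" using pE_0[of h m] by (simp add: zero_fun_def)

lemma pE_Suc0: "pE h (Suc 0) w = cr h 1 w" using pE_one by simp

lemma lin_0: "lin c 0 = sm c vac" by (simp add: lin_def cr_def sm_def fun_eq_iff)

lemma cr_sm_vac_apply': "cr h (Suc 0) (sm d vac) M = (\<Sum>i\<in>UNIV. d * h i * mul_var i (Suc 0) vac M)"
  using cr_sm_vac_apply by simp

lemma sum_01: assumes "\<And>j. j \<ge> 2 \<Longrightarrow> f j = (0::complex)" and "mwt M = 0 \<Longrightarrow> f 1 = 0"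
  shows "(\<Sum>j\<in>{0..mwt M}. f j) = f 0 + f 1"
proof (cases "mwt M = 0")
  case True then show ?thesis using assms by simp
next
  case False
  have "(\<Sum>j\<in>{0..mwt M}. f j) = (\<Sum>j\<in>{0,1}. f j)"
    by (rule sum.mono_neutral_right) (use False assms in auto)
  then show ?thesis by simp
qed

lemma vop_e_tens:
  fixes a :: rt and \<beta> :: wt and n :: int and c :: complex and g :: hvec
  defines "aw \<equiv> root_to_wt a"
  defines "h \<equiv> hv_of_wt aw"
  defines "C \<equiv> n + 1 + pair_rw a \<beta>"
  defines "e \<equiv> epsw aw \<beta>"
  assumes C1: "C \<ge> -1" and C2: "C = -1 \<Longrightarrow> g = 0"
  shows "vop_e a n (tens (lin c g) \<beta>) = tens (lin
     (e * ((if C = 0 then c else 0) + (if C = 1 then - hform h g else 0)))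
     (\<lambda>i. e * ((if C = 0 then g i - hform h g * h i else 0) + (if C = -1 then c * h i else 0))))
     (\<beta> + aw)"
proof (intro ext)
  fix \<gamma> M
  show "vop_e a n (tens (lin c g) \<beta>) \<gamma> M = tens (lin
     (e * ((if C = 0 then c else 0) + (if C = 1 then - hform h g else 0)))
     (\<lambda>i. e * ((if C = 0 then g i - hform h g * h i else 0) + (if C = -1 then c * h i else 0))))
     (\<beta> + aw) \<gamma> M"
  proof (cases "\<gamma> = \<beta> + aw")
    case False
    then have ne: "\<gamma> - aw \<noteq> \<beta>" by auto
    show ?thesis using False ne
      by (simp add: vop_e_def tens_def Let_def aw_def[symmetric] sE_0' pE_0' cong: if_cong)
  next
    case True
    then have eq: "\<gamma> - aw = \<beta>" by auto
    define f where "f j = (if int j + C \<ge> 0 then pE h j (sE h (nat (int j + C)) (lin c g)) M else 0)" for j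
    have lhs: "vop_e a n (tens (lin c g) \<beta>) \<gamma> M = e * (\<Sum>j\<in>{0..mwt M}. f j)"
      unfolding vop_e_def tens_def Let_def
      using eq by (simp add: aw_def h_def e_def f_def C_def algebra_simps cong: if_cong)
    have f2: "f j = 0" if "j \<ge> 2" for j
    proof (cases "int j + C \<ge> 0")
      case True
      have "nat (int j + C) \<ge> 1" using that C1 by auto
      moreover have "nat (int j + C) = 1 \<Longrightarrow> g = 0" using that C1 C2 by auto
      ultimately have "sE h (nat (int j + C)) (lin c g) = 0"
        by (auto simp: sE_lin hform_0 sm_0)
      then show ?thesis by (simp add: f_def pE_0)
    qed (simp add: f_def)
    have f1: "mwt M = 0 \<Longrightarrow> f 1 = 0"
      by (simp add: f_def pE_one pE_Suc0 cr_mwt0)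
    have S: "(\<Sum>j\<in>{0..mwt M}. f j) = f 0 + f 1" by (rule sum_01[of f, OF f2 f1])
    have L: "vop_e a n (tens (lin c g) \<beta>) \<gamma> M = e * (f 0 + f 1)" using lhs S by simp
    have R: "tens (lin
     (e * ((if C = 0 then c else 0) + (if C = 1 then - hform h g else 0)))
     (\<lambda>i. e * ((if C = 0 then g i - hform h g * h i else 0) + (if C = -1 then c * h i else 0))))
     (\<beta> + aw) \<gamma> M = lin
     (e * ((if C = 0 then c else 0) + (if C = 1 then - hform h g else 0)))
     (\<lambda>i. e * ((if C = 0 then g i - hform h g * h i else 0) + (if C = -1 then c * h i else 0))) M"
      by (simp add: tens_def True)
    consider "C = -1" | "C = 0" | "C = 1" | "C \<ge> 2" using C1 by linarith
    then show ?thesis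
    proof cases
      case 1
      then have g0: "g = 0" using C2 by simp
      have F0: "f 0 = 0" using 1 by (simp add: f_def)
      have F1: "f 1 = cr h 1 (sm c vac) M"
        using 1 g0 by (simp add: f_def pE_one pE_Suc0 sE_zero lin_0)
      show ?thesis unfolding L R F0 F1 using 1 g0
        by (simp add: lin_apply cr_sm_vac_apply cr_sm_vac_apply' UNIV_idx algebra_simps)
    next
      case 2
      have F0: "f 0 = lin c g M" using 2 by (simp add: f_def sE_zero pE_zero)
      have F1: "f 1 = cr h 1 (sm (- hform h g) vac) M"
        using 2 by (simp add: f_def pE_one pE_Suc0 sE_lin)
      show ?thesis unfolding L R F0 F1 using 2
        by (simp add: lin_apply cr_sm_vac_apply cr_sm_vac_apply' UNIV_idx algebra_simps)
    next
      case 3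
      have F0: "f 0 = - hform h g * vac M" using 3 by (simp add: f_def sE_lin sm_def pE_zero)
      have F1: "f 1 = 0"
        using 3 by (simp add: f_def pE_one pE_Suc0 sE_lin cr_0 nat_add_distrib)
      show ?thesis unfolding L R F0 F1 using 3
        by (simp add: lin_apply UNIV_idx algebra_simps)
    next
      case 4
      have "nat C \<noteq> 1" using 4 by auto
      then have F0: "f 0 = 0" using 4 by (simp add: f_def sE_lin pE_zero)
      have "nat (1 + C) \<noteq> 1" using 4 by auto
      then have F1: "f 1 = 0"
        using 4 by (simp add: f_def pE_one pE_Suc0 sE_lin cr_0)
      show ?thesis unfolding L R F0 F1 using 4
        by (simp add: lin_apply UNIV_idx algebra_simps)
    qed
  qed
qed


lemma vop_e_tens_pos:
  assumes "n + 1 + pair_rw a \<beta> \<ge> 0"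
  shows "vop_e a n (tens (lin c g) \<beta>) = tens (lin
     (epsw (root_to_wt a) \<beta> * ((if n + 1 + pair_rw a \<beta> = 0 then c else 0)
        + (if n + 1 + pair_rw a \<beta> = 1 then - hform (hv_of_wt (root_to_wt a)) g else 0)))
     (\<lambda>i. epsw (root_to_wt a) \<beta> * (if n + 1 + pair_rw a \<beta> = 0
        then g i - hform (hv_of_wt (root_to_wt a)) g * hv_of_wt (root_to_wt a) i else 0)))
     (\<beta> + root_to_wt a)"
  using vop_e_tens[of n a \<beta> g c] assms by simp

lemma vop_e_tens_m1:
  assumes "n + 1 + pair_rw a \<beta> = -1"
  shows "vop_e a n (tens (lin c 0) \<beta>) = tens (lin 0
     (\<lambda>i. epsw (root_to_wt a) \<beta> * c * hv_of_wt (root_to_wt a) i))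
     (\<beta> + root_to_wt a)"
  using vop_e_tens[of n a \<beta> 0 c] assms by (simp add: hform_0 mult.assoc)



lemma sE_add: "sE h m (w1 + w2) = sE h m w1 + sE h m w2"
proof (induction m rule: less_induct)
  case (less m)
  show ?case
  proof (cases "m = 0")
    case True then show ?thesis by (simp add: sE_zero)
  next
    case False
    have "\<And>k. k \<in> {1..m} \<Longrightarrow> an h k (sE h (m - k) (w1 + w2)) = an h k (sE h (m - k) w1) + an h k (sE h (m - k) w2)"
    proof -
      fix k assume "k \<in> {1..m}"
      then have "m - k < m" by auto
      then have "sE h (m - k) (w1 + w2) = sE h (m - k) w1 + sE h (m - k) w2" by (rule less.IH)
      then show "an h k (sE h (m - k) (w1 + w2)) = an h k (sE h (m - k) w1) + an h k (sE h (m - k) w2)"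
        by (simp add: an_add)
    qed
    then show ?thesis using False
      by (subst (1 2 3) sE.simps) (simp add: fun_eq_iff sum.distrib algebra_simps)
  qed
qed

lemma pE_add: "pE h m (w1 + w2) = pE h m w1 + pE h m w2"
proof (induction m rule: less_induct)
  case (less m)
  show ?case
  proof (cases "m = 0")
    case True then show ?thesis by (simp add: pE_zero)
  next
    case False
    have "\<And>k. k \<in> {1..m} \<Longrightarrow> cr h k (pE h (m - k) (w1 + w2)) = cr h k (pE h (m - k) w1) + cr h k (pE h (m - k) w2)"
    proof -
      fix k assume "k \<in> {1..m}"
      then have "m - k < m" by auto
      then have "pE h (m - k) (w1 + w2) = pE h (m - k) w1 + pE h (m - k) w2" by (rule less.IH)
      then show "cr h k (pE h (m - k) (w1 + w2)) = cr h k (pE h (m - k) w1) + cr h k (pE h (m - k) w2)"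
        by (simp add: cr_add)
    qed
    then show ?thesis using False
      by (subst (1 2 3) pE.simps) (simp add: fun_eq_iff sum.distrib algebra_simps)
  qed
qed

lemma if_add0: "(if P then (A::complex) + B else 0) = (if P then A else 0) + (if P then B else 0)" by simp
lemma if_add2: "(if P then A1 + A2 else B1 + B2) = (if P then A1 else B1) + (if P then A2 else B2)" by simp

lemma vop_e_add: "vop_e a n (v1 + v2) = vop_e a n v1 + vop_e a n v2"
  by (simp add: vop_e_def fun_eq_iff Let_def sE_add pE_add if_add0 sum.distrib distrib_left cong: if_cong)

lemma hmode_add: "hmode h m (v1 + v2) = hmode h m v1 + hmode h m v2"
  by (simp add: hmode_def fun_eq_iff cr_add an_add algebra_simps)

lemma vop_hh_add: "vop_hh h1 h2 n (v1 + v2) = vop_hh h1 h2 n v1 + vop_hh h1 h2 n v2"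
  by (simp add: vop_hh_def fun_eq_iff hmode_add if_add2 sum.distrib del: plus_fun_apply cong: if_cong)
     (simp add: sum.distrib)



definition hm :: "hvec \<Rightarrow> int \<Rightarrow> wt \<Rightarrow> fock \<Rightarrow> fock" where
  "hm h m \<beta> u = (if m < 0 then cr h (nat (- m)) u else if m = 0 then sm (hform h (hv_of_wt \<beta>)) u else an h (nat m) u)"

lemma hmode_tens: "hmode h m (tens u \<beta>) = tens (hm h m \<beta> u) \<beta>"
proof -
  have z1: "cr h k (\<lambda>_. 0) = (\<lambda>_. 0)" for k using cr_0[of h k] by (simp add: zero_fun_def)
  have z2: "an h k (\<lambda>_. 0) = (\<lambda>_. 0)" for k using an_0[of h k] by (simp add: zero_fun_def)
  show ?thesis
  proof (intro ext)
    fix \<gamma> M show "hmode h m (tens u \<beta>) \<gamma> M = tens (hm h m \<beta> u) \<beta> \<gamma> M"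
      by (cases "\<gamma> = \<beta>") (auto simp: hmode_def tens_def hm_def sm_def z1 z2)
  qed
qed

lemma hm_zero: "hm h m \<beta> 0 = 0" by (simp add: hm_def cr_0 an_0 sm_zero)

lemma sm_vac_lin: "sm d vac = lin d 0" by (simp add: lin_0)

lemma hform_sc: "hform h (\<lambda>i. d * g i) = d * hform h g"
  by (simp add: hform_def sum_distrib_left algebra_simps)

lemma sm_lin: "sm d (lin c g) = lin (d * c) (\<lambda>i. d * g i)"
  by (simp add: lin_def sm_def cr_def fun_eq_iff sum_distrib_left algebra_simps)

lemma lin_add: "lin c g + lin c' g' = lin (c + c') (\<lambda>i. g i + g' i)"
  by (simp add: lin_def cr_def fun_eq_iff sum.distrib algebra_simps)

lemma lin_zero: "lin 0 0 = 0"
  by (simp add: lin_def cr_def fun_eq_iff)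

lemma hm_pos_lin: "m \<ge> 1 \<Longrightarrow> hm h m \<beta> (lin c g) = (if m = 1 then lin (hform h g) 0 else 0)"
proof -
  assume "m \<ge> 1"
  moreover have "nat m = 1 \<longleftrightarrow> m = 1" using \<open>m \<ge> 1\<close> by auto
  ultimately show ?thesis by (simp add: hm_def an_lin sm_vac_lin)
qed

lemma lin_lam0: "lin c (\<lambda>i. 0) = lin c 0" by (simp add: zero_fun_def)

lemma hm_0_lin: "hm h 0 \<beta> (lin c g) = lin (hform h (hv_of_wt \<beta>) * c) (\<lambda>i. hform h (hv_of_wt \<beta>) * g i)"
  by (simp add: hm_def sm_lin)

lemma hm_m1_lin0: "hm h (-1) \<beta> (lin c 0) = lin 0 (\<lambda>i. c * h i)"
  by (simp add: hm_def lin_0 fun_eq_iff cr_sm_vac_apply' lin_apply mult_ac)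

lemma lin_mwt0: "mwt M = 0 \<Longrightarrow> lin 0 g M = 0"
  by (simp add: lin_def cr_mwt0)

lemma vop_hh_tens:
  fixes h1 h2 g :: hvec and \<beta> :: wt and n :: int and c :: complex
  assumes n: "n \<ge> 1"
  defines "b1 \<equiv> hform h1 (hv_of_wt \<beta>)"
  defines "b2 \<equiv> hform h2 (hv_of_wt \<beta>)"
  shows "vop_hh h1 h2 n (tens (lin c g) \<beta>) = tens
    (if n = 1 then lin (b1 * b2 * c) (\<lambda>i. b1 * b2 * g i + hform h1 g * h2 i + hform h2 g * h1 i)
     else if n = 2 then lin (b1 * hform h2 g + b2 * hform h1 g) 0 else 0) \<beta>"
proof (intro ext)
  fix \<gamma> M
  define u where "u = lin c g"
  define T where "T a = (if a \<ge> 0 \<and> n - 1 - a < 0 then hm h2 (n - 1 - a) \<beta> (hm h1 a \<beta> u)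
        else hm h1 a \<beta> (hm h2 (n - 1 - a) \<beta> u))" for a
  have V: "vop_hh h1 h2 n (tens u \<beta>) \<gamma> M =
     (\<Sum>a\<in>{- int (mwt M) .. n - 1 + int (mwt M)}. tens (T a) \<beta> \<gamma> M)"
    unfolding vop_hh_def hmode_tens T_def by (rule sum.cong) auto
  show "vop_hh h1 h2 n (tens (lin c g) \<beta>) \<gamma> M = tens
    (if n = 1 then lin (b1 * b2 * c) (\<lambda>i. b1 * b2 * g i + hform h1 g * h2 i + hform h2 g * h1 i)
     else if n = 2 then lin (b1 * hform h2 g + b2 * hform h1 g) 0 else 0) \<beta> \<gamma> M"
  proof (cases "\<gamma> = \<beta>")
    case False
    then show ?thesis using V by (simp add: u_def tens_def)
  next
    case True
    have Tz: "T a = 0" if "a \<notin> {-1, 0, 1}" for a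
    proof (cases "a \<ge> 2")
      case True
      have h1a: "hm h1 a \<beta> u = 0" using True by (simp add: u_def hm_pos_lin)
      show ?thesis
      proof (cases "n - 1 - a < 0")
        case True then show ?thesis using h1a \<open>a \<ge> 2\<close> by (simp add: T_def hm_zero)
      next
        case False
        then consider "n - 1 - a = 0" | "n - 1 - a = 1" | "n - 1 - a \<ge> 2" by linarith
        then show ?thesis
        proof cases
          case 1 then show ?thesis using \<open>a \<ge> 2\<close> by (simp add: T_def u_def hm_0_lin hm_pos_lin)
        next
          case 2 then show ?thesis using \<open>a \<ge> 2\<close> by (simp add: T_def u_def hm_pos_lin)
        next
          case 3 then show ?thesis using \<open>a \<ge> 2\<close> by (simp add: T_def u_def hm_pos_lin hm_zero)
        qed
      qed
    next
      case False
      then have "a \<le> -2" using that by auto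
      then have "n - 1 - a \<ge> 2" using n by linarith
      then show ?thesis using \<open>a \<le> -2\<close> by (simp add: T_def u_def hm_pos_lin hm_zero)
    qed
    have Tm1: "T (-1) = (if n = 1 then lin 0 (\<lambda>i. hform h2 g * h1 i) else 0)"
    proof (cases "n = 1")
      case True then show ?thesis by (simp add: T_def u_def hm_pos_lin hm_m1_lin0)
    next
      case False
      then have "n - 1 - (-1) \<ge> 2" using n by linarith
      then show ?thesis using False by (simp add: T_def u_def hm_pos_lin hm_zero)
    qed
    have T0: "T 0 = (if n = 1 then lin (b1 * (b2 * c)) (\<lambda>i. b1 * (b2 * g i))
                     else if n = 2 then lin (b1 * hform h2 g) 0 else 0)"
    proof -
      consider "n = 1" | "n = 2" | "n \<ge> 3" using n by linarith
      then show ?thesis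
      proof cases
        case 1 then show ?thesis by (simp add: T_def u_def hm_0_lin b1_def b2_def)
      next
        case 2 then show ?thesis by (simp add: T_def u_def hm_0_lin hm_pos_lin b1_def b2_def sm_lin lin_lam0)
      next
        case 3
        then have "n - 1 - 0 \<ge> 2" by linarith
        then show ?thesis using 3 by (simp add: T_def u_def hm_pos_lin hm_zero)
      qed
    qed
    have T1: "T 1 = (if n = 1 then lin 0 (\<lambda>i. hform h1 g * h2 i)
                     else if n = 2 then lin (hform h1 (\<lambda>i. b2 * g i)) 0 else 0)"
    proof -
      consider "n = 1" | "n = 2" | "n = 3" | "n \<ge> 4" using n by linarith
      then show ?thesis
      proof cases
        case 1 then show ?thesis by (simp add: T_def u_def hm_pos_lin hm_m1_lin0)
      next
        case 2 then show ?thesis by (simp add: T_def u_def hm_0_lin hm_pos_lin b2_def)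
      next
        case 3 then show ?thesis by (simp add: T_def u_def hm_pos_lin hform_0 sm_vac_lin lin_zero)
      next
        case 4
        then have "n - 1 - 1 \<ge> 2" by linarith
        then show ?thesis using 4 by (simp add: T_def u_def hm_pos_lin hm_zero)
      qed
    qed
    have S: "(\<Sum>a\<in>{- int (mwt M) .. n - 1 + int (mwt M)}. T a M) = T (-1) M + T 0 M + T 1 M"
    proof (cases "mwt M = 0")
      case True
      have m1: "T (-1) M = 0" using True by (simp add: Tm1 lin_mwt0)
      show ?thesis
      proof (cases "n = 1")
        case True
        have "T 1 M = 0" using \<open>mwt M = 0\<close> True by (simp add: T1 lin_mwt0)
        then show ?thesis using \<open>mwt M = 0\<close> True m1 by simp
      next
        case False
        have "(\<Sum>a\<in>{- int (mwt M) .. n - 1 + int (mwt M)}. T a M) = (\<Sum>a\<in>{0,1}. T a M)"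
          by (rule sum.mono_neutral_right) (use False n True Tz in auto)
        then show ?thesis using m1 by simp
      qed
    next
      case False
      have "(\<Sum>a\<in>{- int (mwt M) .. n - 1 + int (mwt M)}. T a M) = (\<Sum>a\<in>{-1,0,1}. T a M)"
        by (rule sum.mono_neutral_right) (use False n Tz in auto)
      then show ?thesis by simp
    qed
    have "vop_hh h1 h2 n (tens (lin c g) \<beta>) \<gamma> M = T (-1) M + T 0 M + T 1 M"
      using V S True by (simp add: u_def tens_def)
    also have "\<dots> = (T (-1) + T 0 + T 1) M" by simp
    also have "T (-1) + T 0 + T 1 = (if n = 1 then lin (b1 * b2 * c) (\<lambda>i. b1 * b2 * g i + hform h1 g * h2 i + hform h2 g * h1 i)
     else if n = 2 then lin (b1 * hform h2 g + b2 * hform h1 g) 0 else 0)"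
      unfolding Tm1 T0 T1
      by (cases "n = 1"; cases "n = 2") (simp_all add: lin_add lin_zero hform_sc lin_lam0 algebra_simps)
    finally show ?thesis using True by (simp add: tens_def)
  qed
qed



lemma vec6_apply [simp]:
  "vec6 a1 a2 a3 a4 a5 a6 I1 = a1" "vec6 a1 a2 a3 a4 a5 a6 I2 = a2" "vec6 a1 a2 a3 a4 a5 a6 I3 = a3"
  "vec6 a1 a2 a3 a4 a5 a6 I4 = a4" "vec6 a1 a2 a3 a4 a5 a6 I5 = a5" "vec6 a1 a2 a3 a4 a5 a6 I6 = a6"
  by (simp_all add: vec6_def)

lemma vec6_ext: "(\<And>i. f i = vec6 a1 a2 a3 a4 a5 a6 i) \<Longrightarrow> f = vec6 a1 a2 a3 a4 a5 a6" by auto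

lemma idx_all: "(\<forall>i. P i) \<longleftrightarrow> P I1 \<and> P I2 \<and> P I3 \<and> P I4 \<and> P I5 \<and> P I6"
  by (metis idx.exhaust)

lemma vec6_eq: "vec6 a1 a2 a3 a4 a5 a6 = vec6 b1 b2 b3 b4 b5 b6 \<longleftrightarrow>
  a1 = b1 \<and> a2 = b2 \<and> a3 = b3 \<and> a4 = b4 \<and> a5 = b5 \<and> a6 = b6"
  unfolding fun_eq_iff idx_all by simp

lemma vec6_add: "vec6 a1 a2 a3 a4 a5 a6 + vec6 b1 b2 b3 b4 b5 b6 = vec6 (a1+b1) (a2+b2) (a3+b3) (a4+b4) (a5+b5) (a6+b6)"
  unfolding fun_eq_iff idx_all by simp
lemma vec6_diff: "vec6 a1 a2 a3 a4 a5 a6 - vec6 b1 b2 b3 b4 b5 b6 = vec6 (a1-b1) (a2-b2) (a3-b3) (a4-b4) (a5-b5) (a6-b6)"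
  unfolding fun_eq_iff idx_all by simp
lemma vec6_uminus: "- vec6 a1 a2 a3 a4 a5 a6 = vec6 (-a1) (-a2) (-a3) (-a4) (-a5) (-a6)"
  unfolding fun_eq_iff idx_all by simp

lemma root_to_wt_vec6: "root_to_wt (vec6 a1 a2 a3 a4 a5 a6) =
  vec6 (2*a1 - a3) (2*a2 - a4) (2*a3 - a1 - a4) (2*a4 - a2 - a3 - a5) (2*a5 - a4 - a6) (2*a6 - a5)"
  unfolding fun_eq_iff idx_all by (simp add: root_to_wt_def UNIV_idx cartan_def)

lemma hv_of_wt_vec6: "hv_of_wt (vec6 a1 a2 a3 a4 a5 a6) =
  vec6 (of_int a1) (of_int a2) (of_int a3) (of_int a4) (of_int a5) (of_int a6)"
  unfolding fun_eq_iff idx_all by (simp add: hv_of_wt_def)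

lemma pair_rw_vec6: "pair_rw (vec6 a1 a2 a3 a4 a5 a6) (vec6 b1 b2 b3 b4 b5 b6) =
  a1*b1 + a2*b2 + a3*b3 + a4*b4 + a5*b5 + a6*b6"
  by (simp add: pair_rw_def UNIV_idx)

lemma epsw_vec6: "epsw (vec6 x1 x2 x3 x4 x5 x6) (vec6 y1 y2 y3 y4 y5 y6) =
  (if even (x2*y1 + x2*y6 + x3*y1 + x4*y2 + x5*y6) then 1 else -1)"
proof -
  have "(\<Sum>i\<in>UNIV. \<Sum>j\<in>UNIV. if eps_tab i j = -1 then vec6 x1 x2 x3 x4 x5 x6 i * vec6 y1 y2 y3 y4 y5 y6 j else 0)
     = x2*y1 + x2*y6 + x3*y1 + x4*y2 + x5*y6"
    by (simp add: UNIV_idx eps_tab_def)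
  then show ?thesis by (simp add: epsw_def)
qed

lemma hform_vec6: "hform (vec6 x1 x2 x3 x4 x5 x6) (vec6 y1 y2 y3 y4 y5 y6) =
  x1 * (4/3) * y1 + x1 * (1) * y2 + x1 * (5/3) * y3 + x1 * (2) * y4 + x1 * (4/3) * y5 + x1 * (2/3) * y6 + x2 * (1) * y1 + x2 * (2) * y2 + x2 * (2) * y3 + x2 * (3) * y4 + x2 * (2) * y5 + x2 * (1) * y6 + x3 * (5/3) * y1 + x3 * (2) * y2 + x3 * (10/3) * y3 + x3 * (4) * y4 + x3 * (8/3) * y5 + x3 * (4/3) * y6 + x4 * (2) * y1 + x4 * (3) * y2 + x4 * (4) * y3 + x4 * (6) * y4 + x4 * (4) * y5 + x4 * (2) * y6 + x5 * (4/3) * y1 + x5 * (2) * y2 + x5 * (8/3) * y3 + x5 * (4) * y4 + x5 * (10/3) * y5 + x5 * (5/3) * y6 + x6 * (2/3) * y1 + x6 * (1) * y2 + x6 * (4/3) * y3 + x6 * (2) * y4 + x6 * (5/3) * y5 + x6 * (4/3) * y6"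
  by (simp add: hform_def UNIV_idx gram_def of_rat_divide)

lemma alpha_vec6: "alpha I1 = vec6 1 0 0 0 0 0" "alpha I2 = vec6 0 1 0 0 0 0" "alpha I3 = vec6 0 0 1 0 0 0"
  "alpha I4 = vec6 0 0 0 1 0 0" "alpha I5 = vec6 0 0 0 0 1 0" "alpha I6 = vec6 0 0 0 0 0 1"
  unfolding fun_eq_iff idx_all by (simp_all add: alpha_def)

lemma zero_vec6: "(0 :: idx \<Rightarrow> 'a::zero) = vec6 0 0 0 0 0 0"
  unfolding fun_eq_iff idx_all by simp

lemma cr_vac_lin: "cr g 1 vac = lin 0 g" by (simp add: lin_def fun_eq_iff)
lemma c_vac_lin: "(\<lambda>M. c * vac M) = lin c 0" by (simp add: lin_0 sm_def)

lemma P_vec_lin: "P_vec =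
   tens (lin 0 (vec6 (-3) 0 0 0 0 3)) (vec6 0 0 1 0 (-1) 1)
 + tens (lin 0 (vec6 3 0 0 0 0 (-3))) (vec6 1 0 (-1) 0 1 0)
 + tens (lin 3 0) (vec6 2 0 0 0 0 (-1))
 + tens (lin 3 0) (vec6 (-1) 0 0 0 0 2)"
  unfolding P_vec_def cr_vac_lin c_vac_lin
  by (simp add: root_to_wt_vec6 hv_of_wt_vec6 mu_def tau_mu_def alpha_vec6 vec6_add vec6_diff)



lemma tens_lin_apply: "tens (lin c g) \<beta> \<gamma> = lin (if \<gamma> = \<beta> then c else 0) (\<lambda>i. if \<gamma> = \<beta> then g i else 0)"
  by (cases "\<gamma> = \<beta>") (simp_all add: tens_def lin_def cr_def)

lemma tens_zero: "tens 0 \<beta> = 0" by (simp add: tens_def fun_eq_iff)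

lemma lin_eqI: "c = c' \<Longrightarrow> (\<And>i. g i = g' i) \<Longrightarrow> lin c g = lin c' g'"
proof -
  assume a: "c = c'" and b: "\<And>i. g i = g' i"
  have "g = g'" using b by (simp add: fun_eq_iff)
  with a show ?thesis by simp
qed

lemmas mulvar_vac1 = mulvar_vac

lemma var_inj: "var i k = var j k \<longleftrightarrow> i = j"
  using sum_var_eq[of 0 i k j k] by simp

lemma var_ne_zero: "var i k \<noteq> 0"
  using var_ne0[of 0 i k] by simp

lemma lin_eq0_iff: "lin c g = 0 \<longleftrightarrow> c = 0 \<and> (\<forall>i. g i = 0)"
proof
  assume a: "lin c g = 0"
  have "lin c g 0 = 0" using a by simp
  then have c: "c = 0" by (simp add: lin_apply mulvar_vac1 vac_eq var_ne_zero[symmetric])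
  have "g i = 0" for i
  proof -
    have "lin c g (var i 1) = 0" using a by simp
    moreover have "(\<Sum>j\<in>UNIV. g j * mul_var j 1 vac (var i 1)) = g i"
      by (simp add: mulvar_vac1 var_inj if_distrib cong: if_cong)
    ultimately show ?thesis using c by (simp add: lin_apply)
  qed
  then show "c = 0 \<and> (\<forall>i. g i = 0)" using c by simp
next
  assume "c = 0 \<and> (\<forall>i. g i = 0)"
  then show "lin c g = 0" by (simp add: lin_def cr_def fun_eq_iff)
qed

lemma lin_eq_iff: "lin c g = lin c' g' \<longleftrightarrow> c = c' \<and> (\<forall>i. g i = g' i)"
proof -
  have "lin c g = lin c' g' \<longleftrightarrow> lin (c - c') (\<lambda>i. g i - g' i) = 0"
  proof
    assume "lin c g = lin c' g'"
    then have "lin c g + lin (- c') (\<lambda>i. - g' i) = lin c' g' + lin (- c') (\<lambda>i. - g' i)" by simp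
    then show "lin (c - c') (\<lambda>i. g i - g' i) = 0" by (simp add: lin_add lin_lam0 lin_zero)
  next
    assume "lin (c - c') (\<lambda>i. g i - g' i) = 0"
    then have "lin (c - c') (\<lambda>i. g i - g' i) + lin c' g' = lin c' g'" by simp
    then show "lin c g = lin c' g'" by (simp add: lin_add)
  qed
  then show ?thesis by (simp add: lin_eq0_iff)
qed

lemma numeral_lin: "numeral k * lin c g = lin (numeral k * c) (\<lambda>i. numeral k * g i)"
  by (simp add: lin_def cr_def fun_eq_iff sum_distrib_left algebra_simps)

lemma vsc_apply: "vsc c v \<gamma> = sm c (v \<gamma>)" by (simp add: vsc_def sm_def)
lemma uminus_lin: "- lin c g = lin (- c) (\<lambda>i. - g i)" by (simp add: lin_def cr_def fun_eq_iff sum_negf)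
lemma minus_lin: "lin c g - lin c' g' = lin (c - c') (\<lambda>i. g i - g' i)"
  by (simp add: lin_def cr_def fun_eq_iff sum_subtractf algebra_simps)

lemmas vsimps = vec6_add vec6_diff vec6_uminus root_to_wt_vec6 hv_of_wt_vec6 pair_rw_vec6 epsw_vec6
  hform_vec6 alpha_vec6 theta_def vec6_eq numeral_lin

lemma HW1: "vop_e (- theta) 1 P_vec = 0"
proof (rule ext)
  fix \<gamma>
  have "vop_e (- theta) 1 P_vec \<gamma> = lin 0 0"
    unfolding P_vec_lin vop_e_add
    apply (simp add: vop_e_tens_pos vop_e_tens_m1 vsimps tens_lin_apply tens_zero hform_0 lin_add lin_lam0 lin_zero lin_eq0_iff idx_all)
    done
  then show "vop_e (- theta) 1 P_vec \<gamma> = 0 \<gamma>" by (simp add: lin_zero)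
qed

lemma HW2a: "vop_e (alpha I2) 0 P_vec = 0"
proof (rule ext)
  fix \<gamma>
  have "(vop_e (alpha I2) 0 P_vec) \<gamma> = lin 0 0"
    unfolding P_vec_lin vop_e_add
    by (simp add: vop_e_tens_pos vop_e_tens_m1 vsimps tens_lin_apply tens_zero hform_0 lin_add lin_lam0 lin_zero lin_eq0_iff idx_all)
  then show "(vop_e (alpha I2) 0 P_vec) \<gamma> = 0 \<gamma>" by (simp add: lin_zero)
qed

lemma HW2b: "vop_e (alpha I4) 0 P_vec = 0"
proof (rule ext)
  fix \<gamma>
  have "(vop_e (alpha I4) 0 P_vec) \<gamma> = lin 0 0"
    unfolding P_vec_lin vop_e_add
    by (simp add: vop_e_tens_pos vop_e_tens_m1 vsimps tens_lin_apply tens_zero hform_0 lin_add lin_lam0 lin_zero lin_eq0_iff idx_all)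
  then show "(vop_e (alpha I4) 0 P_vec) \<gamma> = 0 \<gamma>" by (simp add: lin_zero)
qed

lemma HW2c: "vop_e (alpha I3) 0 P_vec + vop_e (alpha I5) 0 P_vec = 0"
proof (rule ext)
  fix \<gamma>
  have "(vop_e (alpha I3) 0 P_vec + vop_e (alpha I5) 0 P_vec) \<gamma> = lin 0 0"
    unfolding P_vec_lin vop_e_add
    by (simp add: vop_e_tens_pos vop_e_tens_m1 vsimps tens_lin_apply tens_zero hform_0 lin_add lin_lam0 lin_zero lin_eq0_iff idx_all)
  then show "(vop_e (alpha I3) 0 P_vec + vop_e (alpha I5) 0 P_vec) \<gamma> = 0 \<gamma>" by (simp add: lin_zero)
qed

lemma HW2d: "vop_e (alpha I1) 0 P_vec + vop_e (alpha I6) 0 P_vec = 0"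
proof (rule ext)
  fix \<gamma>
  have "(vop_e (alpha I1) 0 P_vec + vop_e (alpha I6) 0 P_vec) \<gamma> = lin 0 0"
    unfolding P_vec_lin vop_e_add
    by (simp add: vop_e_tens_pos vop_e_tens_m1 vsimps tens_lin_apply tens_zero hform_0 lin_add lin_lam0 lin_zero lin_eq0_iff idx_all)
  then show "(vop_e (alpha I1) 0 P_vec + vop_e (alpha I6) 0 P_vec) \<gamma> = 0 \<gamma>" by (simp add: lin_zero)
qed

lemma HW3a: "Lvir 1 P_vec = 0"
proof (rule ext)
  fix \<gamma>
  have "Lvir 1 P_vec \<gamma> = lin 0 0"
    unfolding Lvir_def P_vec_lin vop_e_add vop_hh_add
    by (simp add: vop_e_tens_pos vop_e_tens_m1 vop_hh_tens vsimps tens_lin_apply tens_zero hform_0 lin_add lin_lam0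
      lin_zero lin_eq0_iff idx_all vsc_apply sm_zero sm_lin uminus_lin minus_lin gam1_def gam2_def gam3_def
      om_h1_def om_h2_def om_h3_def)
  then show "Lvir 1 P_vec \<gamma> = 0 \<gamma>" by (simp add: lin_zero)
qed

lemma HW3b: "Lvir 2 P_vec = 0"
proof (rule ext)
  fix \<gamma>
  have "Lvir 2 P_vec \<gamma> = lin 0 0"
    unfolding Lvir_def P_vec_lin vop_e_add vop_hh_add
    by (simp add: vop_e_tens_pos vop_e_tens_m1 vop_hh_tens vsimps tens_lin_apply tens_zero hform_0 lin_add lin_lam0
      lin_zero lin_eq0_iff idx_all vsc_apply sm_zero sm_lin uminus_lin minus_lin gam1_def gam2_def gam3_def
      om_h1_def om_h2_def om_h3_def)
  then show "Lvir 2 P_vec \<gamma> = 0 \<gamma>" by (simp add: lin_zero)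
qed

lemma HW4: "Lvir 0 P_vec = vsc (7/5) P_vec"
proof (rule ext)
  fix \<gamma>
  show "Lvir 0 P_vec \<gamma> = vsc (7/5) P_vec \<gamma>"
    unfolding Lvir_def P_vec_lin vop_e_add vop_hh_add
    by (simp add: vop_e_tens_pos vop_e_tens_m1 vop_hh_tens vsimps tens_lin_apply tens_zero hform_0 lin_add lin_lam0
      lin_zero lin_eq0_iff lin_eq_iff idx_all vsc_apply sm_zero sm_lin uminus_lin minus_lin gam1_def gam2_def gam3_def
      om_h1_def om_h2_def om_h3_def)
qed

lemma P_apply: "P_vec \<gamma> = lin
   ((if \<gamma> = vec6 2 0 0 0 0 (-1) then 3 else 0) + (if \<gamma> = vec6 (-1) 0 0 0 0 2 then 3 else 0))
   (\<lambda>i. (if \<gamma> = vec6 0 0 1 0 (-1) 1 then vec6 (-3) 0 0 0 0 3 i else 0)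
        + (if \<gamma> = vec6 1 0 (-1) 0 1 0 then vec6 3 0 0 0 0 (-3) i else 0))"
  unfolding P_vec_lin by (simp add: tens_lin_apply lin_add lin_eq_iff)

lemma P_supp: "P_vec \<gamma> \<noteq> 0 \<Longrightarrow> \<gamma> \<in> {vec6 0 0 1 0 (-1) 1, vec6 1 0 (-1) 0 1 0, vec6 2 0 0 0 0 (-1), vec6 (-1) 0 0 0 0 2}"
  by (rule ccontr) (simp add: P_apply lin_lam0 lin_zero)

lemma lin_fin: "finite {M. lin c g M \<noteq> 0}"
proof (rule finite_subset)
  show "{M. lin c g M \<noteq> 0} \<subseteq> insert 0 ((\<lambda>i. var i 1) ` UNIV)"
  proof
    fix M assume "M \<in> {M. lin c g M \<noteq> 0}"
    then have "lin c g M \<noteq> 0" by simp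
    show "M \<in> insert 0 ((\<lambda>i. var i 1) ` UNIV)"
    proof (rule ccontr)
      assume nm: "M \<notin> insert 0 ((\<lambda>i. var i 1) ` UNIV)"
      then have "\<And>i. M \<noteq> var i 1" "M \<noteq> 0" by auto
      then have "lin c g M = 0" by (simp add: lin_apply mulvar_vac vac_eq)
      with \<open>lin c g M \<noteq> 0\<close> show False by simp
    qed
  qed
qed simp

lemma P_ne0: "P_vec \<noteq> 0"
proof
  assume "P_vec = 0"
  then have "P_vec (vec6 2 0 0 0 0 (-1)) = 0" by simp
  then show False by (simp add: P_apply vec6_eq lin_eq0_iff)
qed

lemma proj_vec6: "proj_wt (vec6 a1 a2 a3 a4 a5 a6) = vec6 ((of_int a1 + of_int a6)/2) (of_int a2) ((of_int a3 + of_int a5)/2)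
   (of_int a4) ((of_int a5 + of_int a3)/2) ((of_int a6 + of_int a1)/2)"
  unfolding fun_eq_iff idx_all by (simp add: proj_wt_def)

theorem lemma6p3:
  shows "is_hwv (7/5) omega4 P_vec"
proof -
  have f1: "finite {\<beta>. P_vec \<beta> \<noteq> 0}"
    by (rule finite_subset[of _ "{vec6 0 0 1 0 (-1) 1, vec6 1 0 (-1) 0 1 0, vec6 2 0 0 0 0 (-1), vec6 (-1) 0 0 0 0 2}"])
       (use P_supp in auto)
  have f2: "\<forall>\<beta>. finite {M. P_vec \<beta> M \<noteq> 0}" by (simp add: P_apply lin_fin)
  have pr: "\<forall>\<beta>. P_vec \<beta> \<noteq> 0 \<longrightarrow> proj_wt \<beta> = omega4"
  proof (intro allI impI)
    fix \<beta> assume "P_vec \<beta> \<noteq> 0"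
    then have "\<beta> \<in> {vec6 0 0 1 0 (-1) 1, vec6 1 0 (-1) 0 1 0, vec6 2 0 0 0 0 (-1), vec6 (-1) 0 0 0 0 2}"
      by (rule P_supp)
    then show "proj_wt \<beta> = omega4" by (auto simp: proj_vec6 omega4_def vec6_eq)
  qed
  show ?thesis unfolding is_hwv_def
    using P_ne0 HW1 HW2a HW2b HW2c HW2d HW3a HW3b HW4 f1 f2 pr by simp
qed

end
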